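(* Let $(G,\cdot)$ and $(H,\circ)$ be WIPLs and let $(A,B,C)$ be an isotopism from $(G,\cdot)$ to $(H,\circ)$. Then for all $x\in G$, $$J_\lambda R_x J_\rho B=C J_\lambda' R_{xA}' J_\rho' \quad\text{and}\quad J_\rho L_x J_\lambda A=C J_\rho' L_{xB}' J_\lambda'.$$
   Context: Maps are written on the right of their arguments ($xU$) and composed left to right: $UV$ means first apply $U$, then $V$. For a loop $(L,\cdot)$ with identity $e$, $x^\rho$ and $x^\lambda$ denote the right and left inverses of $x$ ($x x^\rho=e=x^\lambda x$), and $J_\rho:x\mapsto x^\rho$, $J_\lambda:x\mapsto x^\lambda$, $L_x:y\mapsto xy$, $R_x:y\mapsto yx$. For the loop $(H,\circ)$ (identity $e'$) the corresponding maps are denoted $J_\rho'$ ($y\mapsto y^{\rho'}$), $J_\lambda'$ ($y\mapsto y^{\lambda'}$), $L_y':z\mapsto y\circ z$, $R_y':z\mapsto z\circ y$. $L$ is a weak inverse property loop (WIPL) if $xy\cdot z=e$ implies $x\cdot yz=e$ for all $x,y,z\in L$. A triple $(U,V,W)$ of bijections $G\to H$ between loops $(G,\cdot)$ and $(H,\circ)$ is an isotopism if $xU\circ yV=(x\cdot y)W$ for all $x,y\in G$. *)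

theory Defs
  imports Main
begin

text \<open>A loop is modelled on a whole type: multiplication m with two-sided identity e,
  and unique solvability of a x = b and y a = b.\<close>
definition loop :: "('a \<Rightarrow> 'a \<Rightarrow> 'a) \<Rightarrow> 'a \<Rightarrow> bool" where
  "loop m e \<longleftrightarrow> (\<forall>x. m e x = x \<and> m x e = x)
     \<and> (\<forall>a b. \<exists>!x. m a x = b) \<and> (\<forall>a b. \<exists>!y. m y a = b)"

definition J_rho :: "('a \<Rightarrow> 'a \<Rightarrow> 'a) \<Rightarrow> 'a \<Rightarrow> 'a \<Rightarrow> 'a" where
  "J_rho m e x = (THE y. m x y = e)"

definition J_lambda :: "('a \<Rightarrow> 'a \<Rightarrow> 'a) \<Rightarrow> 'a \<Rightarrow> 'a \<Rightarrow> 'a" where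
  "J_lambda m e x = (THE y. m y x = e)"

definition Lmul :: "('a \<Rightarrow> 'a \<Rightarrow> 'a) \<Rightarrow> 'a \<Rightarrow> 'a \<Rightarrow> 'a" where
  "Lmul m x = (\<lambda>y. m x y)"

definition Rmul :: "('a \<Rightarrow> 'a \<Rightarrow> 'a) \<Rightarrow> 'a \<Rightarrow> 'a \<Rightarrow> 'a" where
  "Rmul m x = (\<lambda>y. m y x)"

definition WIPL :: "('a \<Rightarrow> 'a \<Rightarrow> 'a) \<Rightarrow> 'a \<Rightarrow> bool" where
  "WIPL m e \<longleftrightarrow> loop m e \<and> (\<forall>x y z. m (m x y) z = e \<longrightarrow> m x (m y z) = e)"

definition isotopism :: "('a \<Rightarrow> 'a \<Rightarrow> 'a) \<Rightarrow> ('b \<Rightarrow> 'b \<Rightarrow> 'b)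
    \<Rightarrow> ('a \<Rightarrow> 'b) \<Rightarrow> ('a \<Rightarrow> 'b) \<Rightarrow> ('a \<Rightarrow> 'b) \<Rightarrow> bool" where
  "isotopism m n U V W \<longleftrightarrow> bij U \<and> bij V \<and> bij W \<and> (\<forall>x y. n (U x) (V y) = W (m x y))"

end

theory Submission
  imports Defs
begin

lemma lcanc: "loop m e \<Longrightarrow> m a x = m a y \<Longrightarrow> x = y"
proof -
  assume L: "loop m e" and h: "m a x = m a y"
  from L have "\<exists>!z. m a z = m a y" unfolding loop_def by blast
  thus "x = y" using h by blast
qed

lemma rcanc: "loop m e \<Longrightarrow> m x a = m y a \<Longrightarrow> x = y"
proof -
  assume L: "loop m e" and h: "m x a = m y a"
  from L have "\<exists>!z. m z a = m y a" unfolding loop_def by blast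
  thus "x = y" using h by blast
qed

lemma rho_ax: "loop m e \<Longrightarrow> m x (J_rho m e x) = e"
proof -
  assume L: "loop m e"
  from L have "\<exists>!z. m x z = e" unfolding loop_def by blast
  thus ?thesis unfolding J_rho_def by (rule theI')
qed

lemma lam_ax: "loop m e \<Longrightarrow> m (J_lambda m e x) x = e"
proof -
  assume L: "loop m e"
  from L have "\<exists>!z. m z x = e" unfolding loop_def by blast
  thus ?thesis unfolding J_lambda_def by (rule theI')
qed

lemma rho_eq: "loop m e \<Longrightarrow> m x y = e \<Longrightarrow> J_rho m e x = y"
  by (metis rho_ax lcanc)

lemma lam_eq: "loop m e \<Longrightarrow> m y x = e \<Longrightarrow> J_lambda m e x = y"
  by (metis lam_ax rcanc)

lemma wip1: "WIPL m e \<Longrightarrow> m (m x y) z = e \<Longrightarrow> m x (m y z) = e"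
  unfolding WIPL_def by blast

lemma wip2:
  assumes W: "WIPL m e" and h: "m a (m b c) = e"
  shows "m (m a b) c = e"
proof -
  have L: "loop m e" using W unfolding WIPL_def by blast
  define d where "d = J_rho m e (m a b)"
  have "m (m a b) d = e" using rho_ax[OF L] d_def by simp
  hence "m a (m b d) = e" using wip1[OF W] by blast
  hence "m b d = m b c" using h lcanc[OF L] by metis
  hence "d = c" using lcanc[OF L] by metis
  thus ?thesis using \<open>m (m a b) d = e\<close> by simp
qed

theorem mainTheorem7:
  fixes m :: "'a \<Rightarrow> 'a \<Rightarrow> 'a" and e :: 'a
    and n :: "'b \<Rightarrow> 'b \<Rightarrow> 'b" and e' :: 'b
    and A B C :: "'a \<Rightarrow> 'b"
  assumes "WIPL m e" and "WIPL n e'" and "isotopism m n A B C"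
  shows "\<forall>x. B \<circ> J_rho m e \<circ> Rmul m x \<circ> J_lambda m e
              = J_rho n e' \<circ> Rmul n (A x) \<circ> J_lambda n e' \<circ> C
           \<and> A \<circ> J_lambda m e \<circ> Lmul m x \<circ> J_rho m e
              = J_lambda n e' \<circ> Lmul n (B x) \<circ> J_rho n e' \<circ> C"
proof (intro allI conjI ext)
  fix x y
  have Lm: "loop m e" and Ln: "loop n e'" using assms(1,2) unfolding WIPL_def by blast+
  have iso: "\<And>a b. n (A a) (B b) = C (m a b)" using assms(3) unfolding isotopism_def by blast
  show "(B \<circ> J_rho m e \<circ> Rmul m x \<circ> J_lambda m e) y
        = (J_rho n e' \<circ> Rmul n (A x) \<circ> J_lambda n e' \<circ> C) y"
  proof -
    define z where "z = J_rho m e (m (J_lambda m e y) x)"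
    have "m (m (J_lambda m e y) x) z = e" using rho_ax[OF Lm] z_def by simp
    hence "m (J_lambda m e y) (m x z) = e" by (rule wip1[OF assms(1)])
    hence xz: "m x z = y" using lam_ax[OF Lm, of y] lcanc[OF Lm] by metis
    define u where "u = J_lambda n e' (C y)"
    have "n u (C y) = e'" using lam_ax[OF Ln] u_def by simp
    hence "n u (n (A x) (B z)) = e'" using iso xz by simp
    hence "n (n u (A x)) (B z) = e'" by (rule wip2[OF assms(2)])
    hence "J_rho n e' (n u (A x)) = B z" by (rule rho_eq[OF Ln])
    thus ?thesis by (simp add: z_def u_def Rmul_def)
  qed
  show "(A \<circ> J_lambda m e \<circ> Lmul m x \<circ> J_rho m e) y
        = (J_lambda n e' \<circ> Lmul n (B x) \<circ> J_rho n e' \<circ> C) y"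
  proof -
    define w where "w = J_lambda m e (m x (J_rho m e y))"
    have "m w (m x (J_rho m e y)) = e" using lam_ax[OF Lm] w_def by simp
    hence "m (m w x) (J_rho m e y) = e" by (rule wip2[OF assms(1)])
    hence wx: "m w x = y" using rho_ax[OF Lm, of y] rcanc[OF Lm] by metis
    define v where "v = J_rho n e' (C y)"
    have "n (C y) v = e'" using rho_ax[OF Ln] v_def by simp
    hence "n (n (A w) (B x)) v = e'" using iso wx by simp
    hence "n (A w) (n (B x) v) = e'" by (rule wip1[OF assms(2)])
    hence "J_lambda n e' (n (B x) v) = A w" by (rule lam_eq[OF Ln])
    thus ?thesis by (simp add: w_def v_def Lmul_def)
  qed
qed

end
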